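(* Fix $x_0\in\mathbb{R}^n$ and an integer $\ell\ge1$, and consider the following iteration (Kaczmarz method with affine search). For $k=0,1,2,\ldots$: set $d_k=P(x_k)-x_k$ and $\delta_k=\|d_k\|^2$; if $\delta_k=0$, terminate and return $x_k$; otherwise set $\rho_k=\|r(x_k)\|^2$, $\gamma_k=\frac12(\rho_k+\delta_k)$, $j_k=\max\{k-\ell+1,0\}$, $V_k=(x_{j_k}-x_k,\ldots,x_{k-1}-x_k)\in\mathbb{R}^{n\times(k-j_k)}$ (empty if $k=j_k$), $M_k=(V_k,d_k)\in\mathbb{R}^{n\times(k-j_k+1)}$, let $s_k$ solve $M_k^TM_ks_k=\gamma_ke_{k-j_k+1}$ (with $e_{k-j_k+1}$ the last unit vector of $\mathbb{R}^{k-j_k+1}$), and set $x_{k+1}=x_k+M_ks_k$. Let $x^*\in\mathbb{R}^n$ satisfy $Ax^*=b$. Then either the iteration terminates and returns some $x_k$ with $Ax_k=b$, or it generates a well-defined infinite sequence $(x_k)_k$ (i.e. every $M_k^TM_k$ is invertible) such that for all $k\in\mathbb{N}$: \[x_{k+1}=\operatorname{argmin}_{\xi\in\operatorname{aff}(x_{j_k},\ldots,x_k,P(x_k))}\|\xi-x^*\|^2,\qquad \|x_k-x^*\|^2-\|x_{k+1}-x^*\|^2=\gamma_k^2\frac{\det(V_k^TV_k)}{\det(M_k^TM_k)},\] and in particular $\|x_{k+1}-x^*\|^2\le\|P(x_k)-x^*\|^2$ for all $k$.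
   Context: Let $A=(a_1,\ldots,a_m)^T\in\mathbb{R}^{m\times n}$ with rows $a_j\in\mathbb{R}^n\setminus\{0\}$, and let $b\in\mathbb{R}^m$ lie in the range of $A$. Norms are Euclidean. For $j=1,\ldots,m$ define the projectors $P_j:\mathbb{R}^n\to\mathbb{R}^n$, $P_j(x)=\big(I-\frac{a_ja_j^T}{\|a_j\|^2}\big)x+\frac{b_j}{\|a_j\|^2}a_j$ (the orthogonal projection onto $\{z:a_j^Tz=b_j\}$), and the Kaczmarz cycle $P=P_m\circ\cdots\circ P_1$. The residual $r:\mathbb{R}^n\to\mathbb{R}^m$ is defined by $r_1(x)=(a_1^Tx-b_1)/\|a_1\|$ and $r_j(x)=(a_j^T(P_{j-1}\circ\cdots\circ P_1)(x)-b_j)/\|a_j\|$ for $j=2,\ldots,m$. $\operatorname{aff}(\cdot)$ denotes the affine hull. The determinant of an empty ($0\times0$) Gram matrix is taken to be $1$. *)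

theory Defs
  imports "HOL-Analysis.Analysis" "Jordan_Normal_Form.Determinant"
begin

text \<open>Rows of A are a 0 .. a (m-1) (0-indexed), right-hand side b 0 .. b (m-1).\<close>

definition kproj :: "(nat \<Rightarrow> real^'n) \<Rightarrow> (nat \<Rightarrow> real) \<Rightarrow> nat \<Rightarrow> real^'n \<Rightarrow> real^'n" where
  "kproj a b j x = (x - ((a j \<bullet> x) / (norm (a j))^2) *\<^sub>R a j) + (b j / (norm (a j))^2) *\<^sub>R a j"

text \<open>kcyc a b j = P_j o ... o P_1 (0-indexed: projections onto rows 0..j-1).\<close>
primrec kcyc :: "(nat \<Rightarrow> real^'n) \<Rightarrow> (nat \<Rightarrow> real) \<Rightarrow> nat \<Rightarrow> real^'n \<Rightarrow> real^'n" where
  "kcyc a b 0 x = x"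
| "kcyc a b (Suc j) x = kproj a b j (kcyc a b j x)"

definition kP :: "(nat \<Rightarrow> real^'n) \<Rightarrow> (nat \<Rightarrow> real) \<Rightarrow> nat \<Rightarrow> real^'n \<Rightarrow> real^'n" where
  "kP a b m x = kcyc a b m x"

text \<open>Residual component r_(j+1)(x) (0-indexed j < m) and squared norm of the residual.\<close>
definition kres :: "(nat \<Rightarrow> real^'n) \<Rightarrow> (nat \<Rightarrow> real) \<Rightarrow> nat \<Rightarrow> real^'n \<Rightarrow> real" where
  "kres a b j x = (a j \<bullet> kcyc a b j x - b j) / norm (a j)"

definition kres_sq :: "(nat \<Rightarrow> real^'n) \<Rightarrow> (nat \<Rightarrow> real) \<Rightarrow> nat \<Rightarrow> real^'n \<Rightarrow> real" where
  "kres_sq a b m x = (\<Sum>j<m. (kres a b j x)^2)"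

text \<open>Gram matrix C^T C of the matrix C whose columns are the list cs.\<close>
definition gram :: "(real^'n) list \<Rightarrow> real mat" where
  "gram cs = mat (length cs) (length cs) (\<lambda>(i,j). cs ! i \<bullet> cs ! j)"

definition colcomb :: "(real^'n) list \<Rightarrow> real vec \<Rightarrow> real^'n" where
  "colcomb cs s = (\<Sum>i<length cs. (vec_index s i) *\<^sub>R cs ! i)"

definition kd :: "(nat \<Rightarrow> real^'n) \<Rightarrow> (nat \<Rightarrow> real) \<Rightarrow> nat \<Rightarrow> real^'n \<Rightarrow> real^'n" where
  "kd a b m x = kP a b m x - x"

definition kgamma :: "(nat \<Rightarrow> real^'n) \<Rightarrow> (nat \<Rightarrow> real) \<Rightarrow> nat \<Rightarrow> real^'n \<Rightarrow> real" where
  "kgamma a b m x = (kres_sq a b m x + (norm (kd a b m x))^2) / 2"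

text \<open>j_k = max(k - l + 1, 0) (truncated nat subtraction)\<close>
definition kj :: "nat \<Rightarrow> nat \<Rightarrow> nat" where
  "kj l k = Suc k - l"

definition kV :: "nat \<Rightarrow> (real^'n) list \<Rightarrow> (real^'n) list" where
  "kV l hs = map (\<lambda>i. hs ! i - last hs) [kj l (length hs - 1) ..< length hs - 1]"

definition kM :: "(nat \<Rightarrow> real^'n) \<Rightarrow> (nat \<Rightarrow> real) \<Rightarrow> nat \<Rightarrow> nat \<Rightarrow> (real^'n) list \<Rightarrow> (real^'n) list" where
  "kM a b m l hs = kV l hs @ [kd a b m (last hs)]"

text \<open>s_k: the solution of M_k^T M_k s = gamma_k e_last (unique when the Gram matrix is invertible).\<close>
definition ks :: "(nat \<Rightarrow> real^'n) \<Rightarrow> (nat \<Rightarrow> real) \<Rightarrow> nat \<Rightarrow> nat \<Rightarrow> (real^'n) list \<Rightarrow> real vec" where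
  "ks a b m l hs = (let M = kM a b m l hs; p = length M in
     THE s. s \<in> carrier_vec p \<and> gram M *\<^sub>v s = kgamma a b m (last hs) \<cdot>\<^sub>v unit_vec p (p - 1))"

definition kstep :: "(nat \<Rightarrow> real^'n) \<Rightarrow> (nat \<Rightarrow> real) \<Rightarrow> nat \<Rightarrow> nat \<Rightarrow> (real^'n) list \<Rightarrow> real^'n" where
  "kstep a b m l hs = last hs + colcomb (kM a b m l hs) (ks a b m l hs)"

text \<open>History [x_0, ..., x_k] of the iteration (continued formally regardless of termination).\<close>
primrec khist :: "(nat \<Rightarrow> real^'n) \<Rightarrow> (nat \<Rightarrow> real) \<Rightarrow> nat \<Rightarrow> nat \<Rightarrow> real^'n \<Rightarrow> nat \<Rightarrow> (real^'n) list" where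
  "khist a b m l x0 0 = [x0]"
| "khist a b m l x0 (Suc k) = khist a b m l x0 k @ [kstep a b m l (khist a b m l x0 k)]"

definition kx :: "(nat \<Rightarrow> real^'n) \<Rightarrow> (nat \<Rightarrow> real) \<Rightarrow> nat \<Rightarrow> nat \<Rightarrow> real^'n \<Rightarrow> nat \<Rightarrow> real^'n" where
  "kx a b m l x0 k = khist a b m l x0 k ! k"

end

theory Submission
  imports Defs
begin

lemma norm_sub_smult_sq:
  fixes u w :: "'a::real_inner"
  shows "(norm (u - t *\<^sub>R w))^2 = (norm u)^2 - 2 * t * (w \<bullet> u) + t^2 * (norm w)^2"
  unfolding power2_norm_eq_inner by (simp add: inner_diff_left inner_diff_right inner_commute power2_eq_square algebra_simps)

lemma kproj_dist:
  fixes a :: "nat \<Rightarrow> real^'n" and b :: "nat \<Rightarrow> real"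
  assumes "a j \<noteq> 0" "a j \<bullet> xs = b j"
  shows "(norm (kproj a b j y - xs))^2 = (norm (y - xs))^2 - ((a j \<bullet> y - b j) / norm (a j))^2"
proof -
  define t where "t = (a j \<bullet> y - b j) / (norm (a j))^2"
  have na: "norm (a j) \<noteq> 0" using assms by simp
  have e: "kproj a b j y - xs = (y - xs) - t *\<^sub>R a j"
    unfolding kproj_def t_def by (simp add: algebra_simps diff_divide_distrib)
  have "(norm ((y - xs) - t *\<^sub>R a j))^2 = (norm (y-xs))^2 - 2 * t * (a j \<bullet> (y - xs)) + t^2 * (norm (a j))^2"
    by (rule norm_sub_smult_sq)
  also have "a j \<bullet> (y - xs) = a j \<bullet> y - b j" using assms by (simp add: inner_diff_right)
  finally have f: "(norm (kproj a b j y - xs))^2 = (norm (y-xs))^2 - 2 * t * (a j \<bullet> y - b j) + t^2 * (norm (a j))^2"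
    unfolding e .
  have g: "(0::real) - 2 * p * q + p * p * (r * r) = 0 - (q / r) * (q / r)" if "p = q / (r * r)" "r \<noteq> 0" for p q r :: real
    using that by (simp add: power2_eq_square field_simps)
  show ?thesis using f g[OF _ na, of t "a j \<bullet> y - b j"] t_def by (simp add: power2_eq_square)
qed

lemma kcyc_dist:
  fixes a :: "nat \<Rightarrow> real^'n" and b :: "nat \<Rightarrow> real"
  assumes rows: "\<forall>j<m. a j \<noteq> 0" and sol: "\<forall>j<m. a j \<bullet> xs = b j" and "k \<le> m"
  shows "(norm (kcyc a b k x - xs))^2 = (norm (x - xs))^2 - (\<Sum>j<k. (kres a b j x)^2)"
  using assms(3)
proof (induction k)
  case 0 then show ?case by simp
next
  case (Suc k)
  then have "k < m" by simp
  then show ?case using Suc kproj_dist[of a k xs b "kcyc a b k x"] rows sol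
    by (simp add: kres_def)
qed

lemma kP_dist:
  fixes a :: "nat \<Rightarrow> real^'n" and b :: "nat \<Rightarrow> real"
  assumes rows: "\<forall>j<m. a j \<noteq> 0" and sol: "\<forall>j<m. a j \<bullet> xs = b j"
  shows "(norm (kP a b m x - xs))^2 = (norm (x - xs))^2 - kres_sq a b m x"
  using kcyc_dist[OF rows sol, of m] by (simp add: kP_def kres_sq_def)

lemma kd_gamma:
  fixes a :: "nat \<Rightarrow> real^'n" and b :: "nat \<Rightarrow> real"
  assumes rows: "\<forall>j<m. a j \<noteq> 0" and sol: "\<forall>j<m. a j \<bullet> xs = b j"
  shows "kd a b m x \<bullet> (xs - x) = kgamma a b m x"
proof -
  have e: "kP a b m x - xs = (x - xs) + kd a b m x" by (simp add: kd_def)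
  have "(norm (kP a b m x - xs))^2 = (norm (x-xs))^2 + 2 * (kd a b m x \<bullet> (x - xs)) + (norm (kd a b m x))^2"
    unfolding e by (simp add: power2_norm_eq_inner algebra_simps inner_commute)
  with kP_dist[OF rows sol, of x] show ?thesis
    unfolding kgamma_def by (simp add: inner_diff_right algebra_simps)
qed

lemma kgamma_pos:
  fixes a :: "nat \<Rightarrow> real^'n" and b :: "nat \<Rightarrow> real"
  assumes "kd a b m x \<noteq> 0"
  shows "kgamma a b m x > 0"
proof -
  have "kres_sq a b m x \<ge> 0" unfolding kres_sq_def by (simp add: sum_nonneg)
  moreover have "norm (kd a b m x) > 0" using assms by simp
  ultimately show ?thesis unfolding kgamma_def by (simp add: add_nonneg_pos)
qed

lemma kd_zero_sol:
  fixes a :: "nat \<Rightarrow> real^'n" and b :: "nat \<Rightarrow> real"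
  assumes rows: "\<forall>j<m. a j \<noteq> 0" and sol: "\<forall>j<m. a j \<bullet> xs = b j"
    and d: "kd a b m x = 0"
  shows "\<forall>j<m. a j \<bullet> x = b j"
proof -
  have "kP a b m x = x" using d by (simp add: kd_def)
  then have "kres_sq a b m x = 0" using kP_dist[OF rows sol, of x] by simp
  then have z: "\<forall>j<m. kres a b j x = 0" unfolding kres_sq_def
    by (subst (asm) sum_nonneg_eq_0_iff) auto
  have "k \<le> m \<Longrightarrow> kcyc a b k x = x \<and> (\<forall>j<k. a j \<bullet> x = b j)" for k
  proof (induction k)
    case 0 then show ?case by simp
  next
    case (Suc k)
    then have km: "k < m" by simp
    with Suc have c: "kcyc a b k x = x" by simp
    have "kres a b k x = 0" using z km by simp
    then have "a k \<bullet> x = b k" using c rows km unfolding kres_def by simp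
    then show ?case using Suc c by (auto simp: kproj_def less_Suc_eq)
  qed
  from this[of m] show ?thesis by simp
qed

lemma khist_len: "length (khist a b m l x0 k) = Suc k"
  by (induction k) auto

lemma khist_nth: "i \<le> k \<Longrightarrow> khist a b m l x0 k ! i = kx a b m l x0 i"
proof (induction k)
  case 0 then show ?case by (simp add: kx_def)
next
  case (Suc k)
  show ?case
  proof (cases "i \<le> k")
    case True
    then show ?thesis using Suc by (simp add: nth_append khist_len)
  next
    case False
    then have "i = Suc k" using Suc by simp
    then show ?thesis by (simp add: kx_def)
  qed
qed

lemma khist_last: "last (khist a b m l x0 k) = kx a b m l x0 k"
proof -
  have "khist a b m l x0 k \<noteq> []" using khist_len[of a b m l x0 k] by auto
  then show ?thesis using khist_nth[of k k] khist_len[of a b m l x0 k] by (simp add: last_conv_nth)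
qed

lemma kx_Suc: "kx a b m l x0 (Suc k) = kstep a b m l (khist a b m l x0 k)"
  by (simp add: kx_def nth_append khist_len)

lemma kV_hist: "kV l (khist a b m l x0 k) = map (\<lambda>i. kx a b m l x0 i - kx a b m l x0 k) [kj l k..<k]"
  unfolding kV_def khist_len khist_last by (auto simp: khist_nth)

lemma gram_carrier: "gram cs \<in> carrier_mat (length cs) (length cs)"
  by (simp add: gram_def)

lemma colcomb_inner:
  fixes cs :: "(real^'n) list"
  shows "colcomb cs s \<bullet> w = (\<Sum>i<length cs. vec_index s i * (cs ! i \<bullet> w))"
  unfolding colcomb_def by (simp add: inner_sum_left)

lemma gram_mult_index:
  fixes cs :: "(real^'n) list"
  assumes "s \<in> carrier_vec (length cs)" "i < length cs"
  shows "vec_index (gram cs *\<^sub>v s) i = cs ! i \<bullet> colcomb cs s"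
proof -
  have "vec_index (gram cs *\<^sub>v s) i = (\<Sum>j<length cs. (cs ! i \<bullet> cs ! j) * vec_index s j)"
    using assms unfolding gram_def mult_mat_vec_def scalar_prod_def
    by (auto simp: lessThan_atLeast0 intro!: sum.cong)
  also have "\<dots> = cs ! i \<bullet> colcomb cs s"
    unfolding colcomb_def by (simp add: inner_sum_right mult.commute)
  finally show ?thesis .
qed

definition lindep_free :: "(real^'n) list \<Rightarrow> bool" where
  "lindep_free cs = (\<forall>v \<in> carrier_vec (length cs). colcomb cs v = 0 \<longrightarrow> v = 0\<^sub>v (length cs))"

lemma gram_det_nz:
  fixes cs :: "(real^'n) list"
  assumes "lindep_free cs"
  shows "det (gram cs) \<noteq> 0"
proof
  assume "det (gram cs) = 0"
  then obtain v where v: "v \<in> carrier_vec (length cs)" "v \<noteq> 0\<^sub>v (length cs)" "gram cs *\<^sub>v v = 0\<^sub>v (length cs)"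
    using det_0_iff_vec_prod_zero[OF gram_carrier] by blast
  have "colcomb cs v \<bullet> colcomb cs v = (\<Sum>i<length cs. vec_index v i * (cs ! i \<bullet> colcomb cs v))"
    by (rule colcomb_inner)
  also have "\<dots> = (\<Sum>i<length cs. vec_index v i * vec_index (gram cs *\<^sub>v v) i)"
    using gram_mult_index[OF v(1)] by simp
  also have "\<dots> = 0" using v(3) by simp
  finally have "colcomb cs v = 0" by simp
  with assms v show False unfolding lindep_free_def by blast
qed

lemma det_nz_invertible:
  fixes G :: "real mat"
  assumes G: "G \<in> carrier_mat p p" and d: "det G \<noteq> 0"
  shows "invertible_mat G"
proof -
  define B where "B = (1 / det G) \<cdot>\<^sub>m adj_mat G"
  have B: "B \<in> carrier_mat p p" using adj_mat(1)[OF G] by (simp add: B_def)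
  have "G * B = (1 / det G) \<cdot>\<^sub>m (G * adj_mat G)"
    unfolding B_def using G adj_mat(1)[OF G] by (simp add: mult_smult_distrib)
  also have "\<dots> = 1\<^sub>m p" using adj_mat(2)[OF G] d by (auto intro!: eq_matI)
  finally have 1: "G * B = 1\<^sub>m p" .
  have "B * G = (1 / det G) \<cdot>\<^sub>m (adj_mat G * G)"
    unfolding B_def using G adj_mat(1)[OF G] by (simp add: mult_smult_assoc_mat)
  also have "\<dots> = 1\<^sub>m p" using adj_mat(3)[OF G] d by (auto intro!: eq_matI)
  finally have 2: "B * G = 1\<^sub>m p" .
  show ?thesis unfolding invertible_mat_def inverts_mat_def square_mat.simps
    using G B 1 2 by auto
qed

lemma smult_one_mult_vec:
  fixes v :: "real vec"
  assumes "v \<in> carrier_vec p"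
  shows "(d \<cdot>\<^sub>m 1\<^sub>m p) *\<^sub>v v = d \<cdot>\<^sub>v v"
proof (intro eq_vecI)
  fix i assume i: "i < dim_vec (d \<cdot>\<^sub>v v)"
  then have ip: "i < p" using assms by simp
  have "(\<Sum>ia = 0..<p. d * (if i = ia then 1 else 0) * vec_index v ia) = (\<Sum>ia \<in> {0..<p}. if ia = i then d * vec_index v i else 0)"
    by (intro sum.cong) auto
  also have "\<dots> = d * vec_index v i" using ip by (simp add: sum.delta')
  finally show "vec_index ((d \<cdot>\<^sub>m 1\<^sub>m p) *\<^sub>v v) i = vec_index (d \<cdot>\<^sub>v v) i"
    using assms ip by (simp add: scalar_prod_def one_mat_def)
qed (use assms in simp)

lemma ks_char:
  fixes cs :: "(real^'n) list"
  defines "p \<equiv> length cs"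
  assumes ne: "cs \<noteq> []" and d: "det (gram cs) \<noteq> 0"
  shows "\<exists>s. (THE s. s \<in> carrier_vec p \<and> gram cs *\<^sub>v s = g \<cdot>\<^sub>v unit_vec p (p - 1)) = s
      \<and> s \<in> carrier_vec p \<and> gram cs *\<^sub>v s = g \<cdot>\<^sub>v unit_vec p (p - 1)
      \<and> vec_index s (p - 1) = g * det (mat_delete (gram cs) (p - 1) (p - 1)) / det (gram cs)"
proof -
  let ?G = "gram cs"
  let ?e = "unit_vec p (p - 1) :: real vec"
  have G: "?G \<in> carrier_mat p p" using gram_carrier p_def by simp
  have A: "adj_mat ?G \<in> carrier_mat p p" using adj_mat(1)[OF G] .
  have pp: "p - 1 < p" using ne p_def by simp
  have e: "?e \<in> carrier_vec p" by simp
  define s0 where "s0 = (g / det ?G) \<cdot>\<^sub>v (adj_mat ?G *\<^sub>v ?e)"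
  have s0c: "s0 \<in> carrier_vec p" using A by (simp add: s0_def)
  have "?G *\<^sub>v s0 = (g / det ?G) \<cdot>\<^sub>v (?G *\<^sub>v (adj_mat ?G *\<^sub>v ?e))"
    unfolding s0_def using G A by (simp add: mult_mat_vec)
  also have "?G *\<^sub>v (adj_mat ?G *\<^sub>v ?e) = (?G * adj_mat ?G) *\<^sub>v ?e"
    using G A by simp
  also have "\<dots> = det ?G \<cdot>\<^sub>v ?e" unfolding adj_mat(2)[OF G] by (rule smult_one_mult_vec[OF e])
  finally have s0s: "?G *\<^sub>v s0 = g \<cdot>\<^sub>v ?e" using d by (simp add: smult_smult_assoc)
  have uniq: "s = s0" if "s \<in> carrier_vec p" "?G *\<^sub>v s = g \<cdot>\<^sub>v ?e" for s
  proof -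
    have "adj_mat ?G *\<^sub>v (?G *\<^sub>v s) = adj_mat ?G *\<^sub>v (?G *\<^sub>v s0)" using that s0s by simp
    then have "(adj_mat ?G * ?G) *\<^sub>v s = (adj_mat ?G * ?G) *\<^sub>v s0" using G A that s0c by simp
    then have "det ?G \<cdot>\<^sub>v s = det ?G \<cdot>\<^sub>v s0" unfolding adj_mat(3)[OF G]
      using smult_one_mult_vec that(1) s0c by metis
    then have "(1 / det ?G) \<cdot>\<^sub>v (det ?G \<cdot>\<^sub>v s) = (1 / det ?G) \<cdot>\<^sub>v (det ?G \<cdot>\<^sub>v s0)" by simp
    then show ?thesis using d by (simp add: smult_smult_assoc)
  qed
  have the: "(THE s. s \<in> carrier_vec p \<and> ?G *\<^sub>v s = g \<cdot>\<^sub>v ?e) = s0"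
  proof (rule the_equality)
    show "s0 \<in> carrier_vec p \<and> ?G *\<^sub>v s0 = g \<cdot>\<^sub>v ?e" using s0c s0s by blast
  next
    fix s assume "s \<in> carrier_vec p \<and> ?G *\<^sub>v s = g \<cdot>\<^sub>v ?e"
    then show "s = s0" using uniq by blast
  qed
  have "vec_index s0 (p - 1) = (g / det ?G) * (row (adj_mat ?G) (p - 1) \<bullet> ?e)"
    unfolding s0_def using A pp by simp
  also have "row (adj_mat ?G) (p - 1) \<bullet> ?e = adj_mat ?G $$ (p - 1, p - 1)"
    using A pp by simp
  also have "\<dots> = cofactor ?G (p - 1) (p - 1)" using G pp by (simp add: adj_mat_def)
  also have "\<dots> = det (mat_delete ?G (p - 1) (p - 1))"
  proof -
    have "(-1::real) ^ ((p - 1) + (p - 1)) = 1"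
      by (metis mult_2 power_minus1_even)
    then show ?thesis unfolding cofactor_def by simp
  qed
  finally have sl: "vec_index s0 (p - 1) = g * det (mat_delete ?G (p - 1) (p - 1)) / det ?G" by simp
  show ?thesis
    by (rule exI[of _ s0]) (simp only: the s0c s0s sl simp_thms)
qed

lemma mat_delete_gram:
  fixes V :: "(real^'n) list"
  shows "mat_delete (gram (V @ [d])) (length V) (length V) = gram V"
  by (intro eq_matI) (auto simp: mat_delete_def gram_def nth_append)

lemma colcomb_expand:
  fixes f :: "nat \<Rightarrow> real^'n"
  assumes "j \<le> k"
  shows "colcomb (map f [j..<k] @ [d]) v = (\<Sum>i\<in>{j..<k}. vec_index v (i - j) *\<^sub>R f i) + vec_index v (k - j) *\<^sub>R d"
proof -
  have len: "length (map f [j..<k] @ [d]) = Suc (k - j)" using assms by simp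
  have "colcomb (map f [j..<k] @ [d]) v = (\<Sum>i<k - j. vec_index v i *\<^sub>R f (j + i)) + vec_index v (k - j) *\<^sub>R d"
    unfolding colcomb_def len lessThan_Suc using assms
    by (simp add: nth_append add.commute)
  also have "(\<Sum>i<k - j. vec_index v i *\<^sub>R f (j + i)) = (\<Sum>i\<in>{j..<k}. vec_index v (i - j) *\<^sub>R f i)"
  proof -
    have "(\<Sum>i\<in>{j..<k}. vec_index v (i - j) *\<^sub>R f i) = (\<Sum>i\<in>{0 + j..<(k - j) + j}. vec_index v (i - j) *\<^sub>R f i)"
      using assms by simp
    also have "\<dots> = (\<Sum>i\<in>{0..<k - j}. vec_index v (i + j - j) *\<^sub>R f (i + j))"
      by (rule sum.shift_bounds_nat_ivl)
    finally show ?thesis by (simp add: lessThan_atLeast0 add.commute)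
  qed
  finally show ?thesis .
qed

lemma pyth:
  fixes p q :: "'a::real_inner"
  assumes "p \<bullet> q = 0"
  shows "(norm (p - q))^2 = (norm p)^2 + (norm q)^2"
proof -
  have "q \<bullet> p = 0" using assms by (simp add: inner_commute)
  then show ?thesis using assms unfolding power2_norm_eq_inner by (simp add: inner_diff_left inner_diff_right)
qed

lemma step:
  fixes a :: "nat \<Rightarrow> real^'n" and b :: "nat \<Rightarrow> real" and m l :: nat
    and x0 xs :: "real^'n"
  assumes rows: "\<forall>j<m. a j \<noteq> 0"
    and l: "l \<ge> 1"
    and sol: "\<forall>j<m. a j \<bullet> xs = b j"
  defines "x \<equiv> kx a b m l x0"
    and "H \<equiv> khist a b m l x0"
  assumes orth: "\<forall>i\<in>{kj l k..<k}. (x i - x k) \<bullet> (xs - x k) = 0"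
    and indep: "\<forall>c. (\<Sum>i\<in>{kj l k..<k}. c i *\<^sub>R (x i - x k)) = 0 \<longrightarrow> (\<forall>i\<in>{kj l k..<k}. c i = 0)"
    and dnz: "kd a b m (x k) \<noteq> 0"
  shows "invertible_mat (gram (kM a b m l (H k)))
        \<and> is_arg_min (\<lambda>\<xi>. (norm (\<xi> - xs))^2)
             (\<lambda>\<xi>. \<xi> \<in> affine hull ({x i | i. kj l k \<le> i \<and> i \<le> k} \<union> {kP a b m (x k)}))
             (x (Suc k))
        \<and> (norm (x k - xs))^2 - (norm (x (Suc k) - xs))^2
            = (kgamma a b m (x k))^2 * det (gram (kV l (H k))) / det (gram (kM a b m l (H k)))
        \<and> (norm (x (Suc k) - xs))^2 \<le> (norm (kP a b m (x k) - xs))^2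
        \<and> (\<forall>i\<in>{kj l (Suc k)..<Suc k}. (x i - x (Suc k)) \<bullet> (xs - x (Suc k)) = 0)
        \<and> (\<forall>c. (\<Sum>i\<in>{kj l (Suc k)..<Suc k}. c i *\<^sub>R (x i - x (Suc k))) = 0 \<longrightarrow> (\<forall>i\<in>{kj l (Suc k)..<Suc k}. c i = 0))"
proof -
  define j where "j = kj l k"
  define d where "d = kd a b m (x k)"
  define g where "g = kgamma a b m (x k)"
  define V where "V = kV l (H k)"
  define M where "M = kM a b m l (H k)"
  define p where "p = length M"
  have jk: "j \<le> k" using l by (simp add: j_def kj_def)
  have V: "V = map (\<lambda>i. x i - x k) [j..<k]"
    unfolding V_def H_def x_def j_def by (rule kV_hist)
  have lastH: "last (H k) = x k" unfolding H_def x_def by (rule khist_last)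
  have M: "M = map (\<lambda>i. x i - x k) [j..<k] @ [d]"
    unfolding M_def kM_def d_def lastH V[symmetric] V_def ..
  have p: "p = Suc (k - j)" using jk by (simp add: p_def M)
  have lenV: "length V = k - j" by (simp add: V)
  have gpos: "g > 0" unfolding g_def using kgamma_pos dnz by blast
  have dg: "d \<bullet> (xs - x k) = g" unfolding d_def g_def by (rule kd_gamma[OF rows sol])
  have cc: "colcomb M v = (\<Sum>i\<in>{j..<k}. vec_index v (i - j) *\<^sub>R (x i - x k)) + vec_index v (k - j) *\<^sub>R d" for v
    unfolding M by (rule colcomb_expand[OF jk])
  have indM: "(\<forall>i\<in>{j..<k}. c i = 0) \<and> e = 0"
    if h: "(\<Sum>i\<in>{j..<k}. c i *\<^sub>R (x i - x k)) + e *\<^sub>R d = 0" for c e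
  proof -
    have "((\<Sum>i\<in>{j..<k}. c i *\<^sub>R (x i - x k)) + e *\<^sub>R d) \<bullet> (xs - x k) = 0" using h by simp
    then have "(\<Sum>i\<in>{j..<k}. c i * ((x i - x k) \<bullet> (xs - x k))) + e * g = 0"
      by (simp add: inner_add_left inner_sum_left dg)
    also have "(\<Sum>i\<in>{j..<k}. c i * ((x i - x k) \<bullet> (xs - x k))) = 0"
      using orth by (simp add: j_def)
    finally have e0: "e = 0" using gpos by simp
    then have "(\<Sum>i\<in>{j..<k}. c i *\<^sub>R (x i - x k)) = 0" using h by simp
    then have "\<forall>i\<in>{j..<k}. c i = 0" using indep unfolding j_def by blast
    then show ?thesis using e0 by simp
  qed
  have lf: "lindep_free M"
    unfolding lindep_free_def
  proof (intro ballI impI)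
    fix v :: "real vec" assume v: "v \<in> carrier_vec (length M)" and z: "colcomb M v = 0"
    have "(\<Sum>i\<in>{j..<k}. vec_index v (i - j) *\<^sub>R (x i - x k)) + vec_index v (k - j) *\<^sub>R d = 0"
      using z unfolding cc .
    then have h: "\<forall>i\<in>{j..<k}. vec_index v (i - j) = 0" "vec_index v (k - j) = 0"
      using indM[of "\<lambda>i. vec_index v (i - j)" "vec_index v (k - j)"] by blast+
    have lM: "length M = Suc (k - j)" using p p_def by simp
    show "v = 0\<^sub>v (length M)"
    proof (intro eq_vecI)
      fix i assume "i < dim_vec (0\<^sub>v (length M) :: real vec)"
      then have i: "i < Suc (k - j)" using lM by simp
      show "vec_index v i = vec_index (0\<^sub>v (length M)) i"
      proof (cases "i < k - j")
        case True
        then have ij: "i + j \<in> {j..<k}" by auto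
        have "vec_index v (i + j - j) = 0" using h(1) ij by blast
        then show ?thesis using i lM by simp
      next
        case False
        then have "i = k - j" using i by simp
        then show ?thesis using h(2) i lM by simp
      qed
    qed (use v in simp)
  qed
  have detnz: "det (gram M) \<noteq> 0" using gram_det_nz[OF lf] .
  have inv: "invertible_mat (gram M)" using det_nz_invertible[OF gram_carrier detnz] .
  have Mne: "M \<noteq> []" using M by simp
  have pq: "p - 1 = k - j" using p by simp
  have ks_eq: "ks a b m l (H k) = (THE s. s \<in> carrier_vec p \<and> gram M *\<^sub>v s = g \<cdot>\<^sub>v unit_vec p (p - 1))"
    unfolding ks_def Let_def M_def[symmetric] p_def[symmetric] g_def lastH ..
  obtain s where sdef: "ks a b m l (H k) = s" and sc: "s \<in> carrier_vec p"
    and Gs: "gram M *\<^sub>v s = g \<cdot>\<^sub>v unit_vec p (p - 1)"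
    and sl0: "vec_index s (p - 1) = g * det (mat_delete (gram M) (p - 1) (p - 1)) / det (gram M)"
    using ks_char[OF Mne detnz, of g] unfolding ks_eq p_def[symmetric] by blast
  have md: "mat_delete (gram M) (p - 1) (p - 1) = gram V"
    using mat_delete_gram[of V d] M V lenV pq by simp
  define sq where "sq = vec_index s (k - j)"
  have sl: "sq = g * det (gram V) / det (gram M)" using sl0 md pq by (simp add: sq_def)
  define u where "u = colcomb M s"
  have xk1: "x (Suc k) = x k + u"
  proof -
    have "x (Suc k) = kstep a b m l (H k)" unfolding x_def H_def by (rule kx_Suc)
    also have "\<dots> = x k + colcomb M s" unfolding kstep_def lastH M_def[symmetric] sdef ..
    finally show ?thesis by (simp add: u_def)
  qed
  define w where "w = xs - x (Suc k)"
  have wu: "w = (xs - x k) - u" by (simp add: w_def xk1 algebra_simps)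
  have uexp: "u = (\<Sum>i\<in>{j..<k}. vec_index s (i - j) *\<^sub>R (x i - x k)) + sq *\<^sub>R d"
    unfolding u_def cc sq_def ..
  have colu: "M ! i \<bullet> u = g * vec_index (unit_vec p (p - 1)) i" if "i < p" for i
  proof -
    have "M ! i \<bullet> u = vec_index (gram M *\<^sub>v s) i"
      using gram_mult_index[of s M i] sc that p_def by (simp add: u_def)
    also have "\<dots> = g * vec_index (unit_vec p (p - 1)) i" using Gs that by simp
    finally show ?thesis .
  qed
  have xu: "(x i - x k) \<bullet> u = 0" if "i \<in> {j..<k}" for i
  proof -
    have "i - j < k - j" using that by auto
    then have "M ! (i - j) = x i - x k" using that by (simp add: M nth_append)
    moreover have "i - j < p" "i - j \<noteq> p - 1" using that p by auto
    ultimately show ?thesis using colu[of "i - j"] by simp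
  qed
  have du: "d \<bullet> u = g"
  proof -
    have "M ! (p - 1) = d" using p by (simp add: M nth_append)
    moreover have "p - 1 < p" using p by simp
    ultimately show ?thesis using colu[of "p - 1"] by simp
  qed
  have xw: "(x i - x k) \<bullet> w = 0" if "i \<in> {j..<k}" for i
    using xu[OF that] orth that by (simp add: wu inner_diff_right j_def)
  have dw: "d \<bullet> w = 0" using du dg by (simp add: wu inner_diff_right)
  have uxk: "u \<bullet> (xs - x k) = sq * g"
    unfolding uexp using orth dg by (simp add: inner_add_left inner_sum_left j_def)
  have uw: "u \<bullet> w = 0"
    unfolding uexp using xw dw by (simp add: inner_add_left inner_sum_left)
  have uu: "u \<bullet> u = sq * g"
  proof -
    have "u \<bullet> u = u \<bullet> (xs - x k) - u \<bullet> w" by (simp add: wu inner_diff_right)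
    then show ?thesis using uxk uw by simp
  qed
  have ndiff: "(norm (x k - xs))^2 - (norm (x (Suc k) - xs))^2 = u \<bullet> u"
  proof -
    have e1: "x k - xs = - (w + u)" by (simp add: wu)
    have e2: "x (Suc k) - xs = - w" by (simp add: w_def)
    show ?thesis unfolding e1 e2 norm_minus_cancel power2_norm_eq_inner
      using uw by (simp add: inner_add_left inner_add_right inner_commute)
  qed
  define S where "S = {x i | i. kj l k \<le> i \<and> i \<le> k} \<union> {kP a b m (x k)}"
  have xiS: "x i \<in> S" if "j \<le> i" "i \<le> k" for i using that by (auto simp: S_def j_def)
  have PS: "kP a b m (x k) \<in> S" by (simp add: S_def)
  have Pd: "kP a b m (x k) = x k + d" by (simp add: d_def kd_def)
  have xkS: "x k \<in> S" using xiS[OF jk] by simp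
  have wx: "w \<bullet> (x i - x (Suc k)) = 0" if "j \<le> i" "i \<le> k" for i
  proof -
    have "w \<bullet> (x i - x k) = 0"
    proof (cases "i < k")
      case True then show ?thesis using xw[of i] that by (simp add: inner_commute)
    next
      case False then show ?thesis using that by simp
    qed
    then show ?thesis using uw by (simp add: xk1 inner_diff_right inner_add_right inner_commute algebra_simps)
  qed
  have wP: "w \<bullet> (kP a b m (x k) - x (Suc k)) = 0"
    using uw dw by (simp add: Pd xk1 inner_diff_right inner_add_right inner_commute)
  have ST: "S \<subseteq> {\<xi>. w \<bullet> \<xi> = w \<bullet> x (Suc k)}"
  proof
    fix y assume "y \<in> S"
    then consider i where "y = x i" "j \<le> i" "i \<le> k" | "y = kP a b m (x k)"
      unfolding S_def j_def by blast
    then show "y \<in> {\<xi>. w \<bullet> \<xi> = w \<bullet> x (Suc k)}"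
    proof cases
      case 1 then show ?thesis using wx[of i] by (simp add: inner_diff_right)
    next
      case 2 then show ?thesis using wP by (simp add: inner_diff_right)
    qed
  qed
  have hullT: "affine hull S \<subseteq> {\<xi>. w \<bullet> \<xi> = w \<bullet> x (Suc k)}"
    by (rule hull_minimal[OF ST]) (rule affine_hyperplane)
  have xk1S: "x (Suc k) \<in> affine hull S"
  proof -
    have xkh: "x k \<in> affine hull S" using xkS by (rule hull_inc)
    have "u \<in> span ((\<lambda>y. - x k + y) ` S)"
    proof -
      have "(x i - x k) \<in> span ((\<lambda>y. - x k + y) ` S)" if "i \<in> {j..<k}" for i
      proof -
        have "- x k + x i \<in> (\<lambda>y. - x k + y) ` S" using xiS[of i] that by auto
        then show ?thesis by (simp add: span_base)
      qed
      moreover have "d \<in> span ((\<lambda>y. - x k + y) ` S)"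
      proof -
        have "- x k + kP a b m (x k) \<in> (\<lambda>y. - x k + y) ` S" using PS by auto
        then show ?thesis by (simp add: span_base Pd)
      qed
      ultimately show ?thesis unfolding uexp
        by (intro span_add span_sum span_mul) auto
    qed
    then show ?thesis unfolding affine_hull_span_gen[OF xkh] xk1 by auto
  qed
  have orthS: "(\<xi> - x (Suc k)) \<bullet> w = 0" if "\<xi> \<in> affine hull S" for \<xi>
  proof -
    have "w \<bullet> \<xi> = w \<bullet> x (Suc k)" using hullT that by blast
    then have "w \<bullet> (\<xi> - x (Suc k)) = 0" by (simp add: inner_diff_right)
    then show ?thesis by (simp add: inner_commute)
  qed
  have minS: "(norm (\<xi> - xs))^2 = (norm (\<xi> - x (Suc k)))^2 + (norm (x (Suc k) - xs))^2"
    if "\<xi> \<in> affine hull S" for \<xi>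
  proof -
    have e: "\<xi> - xs = (\<xi> - x (Suc k)) - w" by (simp add: w_def)
    have e2: "x (Suc k) - xs = - w" by (simp add: w_def)
    show ?thesis unfolding e e2 norm_minus_cancel by (rule pyth[OF orthS[OF that]])
  qed
  have argmin: "is_arg_min (\<lambda>\<xi>. (norm (\<xi> - xs))^2) (\<lambda>\<xi>. \<xi> \<in> affine hull S) (x (Suc k))"
    unfolding is_arg_min_def
  proof (intro conjI notI)
    show "x (Suc k) \<in> affine hull S" by (rule xk1S)
  next
    assume "\<exists>y. y \<in> affine hull S \<and> (norm (y - xs))^2 < (norm (x (Suc k) - xs))^2"
    then obtain y where "y \<in> affine hull S" "(norm (y - xs))^2 < (norm (x (Suc k) - xs))^2" by blast
    with minS[of y] show False by simp
  qed
  have ineq: "(norm (x (Suc k) - xs))^2 \<le> (norm (kP a b m (x k) - xs))^2"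
  proof -
    have "kP a b m (x k) \<in> affine hull S" by (rule hull_inc[OF PS])
    from minS[OF this] show ?thesis by simp
  qed
  have alg: "(gg * aa / cc) * gg = gg^2 * aa / cc" for gg aa cc :: real
    by (simp add: power2_eq_square)
  have formula: "(norm (x k - xs))^2 - (norm (x (Suc k) - xs))^2
            = (kgamma a b m (x k))^2 * det (gram (kV l (H k))) / det (gram (kM a b m l (H k)))"
    unfolding ndiff uu sl g_def[symmetric] V_def[symmetric] M_def[symmetric]
    by (rule alg)
  define j' where "j' = kj l (Suc k)"
  have jj': "j \<le> j'" "j' \<le> Suc k" using l by (auto simp: j_def j'_def kj_def)
  have orth1: "\<forall>i\<in>{j'..<Suc k}. (x i - x (Suc k)) \<bullet> (xs - x (Suc k)) = 0"
  proof
    fix i assume "i \<in> {j'..<Suc k}"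
    then have "j \<le> i" "i \<le> k" using jj' by auto
    then show "(x i - x (Suc k)) \<bullet> (xs - x (Suc k)) = 0"
      using wx by (simp add: w_def inner_commute)
  qed
  have s_nz: "s \<noteq> 0\<^sub>v p"
  proof
    assume "s = 0\<^sub>v p"
    then have "gram M *\<^sub>v s = 0\<^sub>v p" using gram_carrier[of M] p_def
      by (intro eq_vecI) (auto simp: scalar_prod_def)
    then have "vec_index (g \<cdot>\<^sub>v unit_vec p (p - 1)) (p - 1) = 0" using Gs p by simp
    then show False using gpos p by simp
  qed
  have u_nz: "u \<noteq> 0"
  proof
    assume "u = 0"
    then have "s = 0\<^sub>v p" using lf sc unfolding lindep_free_def u_def p_def by blast
    with s_nz show False by simp
  qed
  have sq_nz: "sq \<noteq> 0"
  proof
    assume "sq = 0"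
    then have "u \<bullet> u = 0" using uu by simp
    with u_nz show False by simp
  qed
  have indep1: "\<forall>c. (\<Sum>i\<in>{j'..<Suc k}. c i *\<^sub>R (x i - x (Suc k))) = 0 \<longrightarrow> (\<forall>i\<in>{j'..<Suc k}. c i = 0)"
  proof (intro allI impI)
    fix c :: "nat \<Rightarrow> real"
    assume h: "(\<Sum>i\<in>{j'..<Suc k}. c i *\<^sub>R (x i - x (Suc k))) = 0"
    define C where "C = (\<Sum>i\<in>{j'..<Suc k}. c i)"
    define c' where "c' i = (if j' \<le> i then c i else 0)" for i
    have e1: "(\<Sum>i\<in>{j'..<Suc k}. c i *\<^sub>R (x i - x (Suc k)))
        = (\<Sum>i\<in>{j'..<Suc k}. c i *\<^sub>R (x i - x k)) - C *\<^sub>R u"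
    proof -
      have "(\<Sum>i\<in>{j'..<Suc k}. c i *\<^sub>R (x i - x (Suc k)))
          = (\<Sum>i\<in>{j'..<Suc k}. c i *\<^sub>R (x i - x k) - c i *\<^sub>R u)"
        by (intro sum.cong) (simp_all add: xk1 scaleR_diff_right algebra_simps)
      also have "\<dots> = (\<Sum>i\<in>{j'..<Suc k}. c i *\<^sub>R (x i - x k)) - C *\<^sub>R u"
        by (simp only: sum_subtractf C_def scaleR_sum_left)
      finally show ?thesis .
    qed
    have e2: "(\<Sum>i\<in>{j'..<Suc k}. c i *\<^sub>R (x i - x k)) = (\<Sum>i\<in>{j..<k}. c' i *\<^sub>R (x i - x k))"
    proof -
      have "(\<Sum>i\<in>{j'..<Suc k}. c i *\<^sub>R (x i - x k)) = (\<Sum>i\<in>{j'..<Suc k}. c' i *\<^sub>R (x i - x k))"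
        by (intro sum.cong) (auto simp: c'_def)
      also have "\<dots> = (\<Sum>i\<in>{j..<Suc k}. c' i *\<^sub>R (x i - x k))"
        by (rule sum.mono_neutral_left) (use jj' in \<open>auto simp: c'_def\<close>)
      also have "\<dots> = (\<Sum>i\<in>{j..<k}. c' i *\<^sub>R (x i - x k)) + c' k *\<^sub>R (x k - x k)"
        using jk by (rule sum.atLeastLessThan_Suc)
      finally show ?thesis by simp
    qed
    have e3: "(\<Sum>i\<in>{j..<k}. (c' i - C * vec_index s (i - j)) *\<^sub>R (x i - x k)) + (- (C * sq)) *\<^sub>R d
        = (\<Sum>i\<in>{j..<k}. c' i *\<^sub>R (x i - x k)) - C *\<^sub>R u"
    proof -
      have "(\<Sum>i\<in>{j..<k}. (c' i - C * vec_index s (i - j)) *\<^sub>R (x i - x k))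
          = (\<Sum>i\<in>{j..<k}. c' i *\<^sub>R (x i - x k)) - C *\<^sub>R (\<Sum>i\<in>{j..<k}. vec_index s (i - j) *\<^sub>R (x i - x k))"
        by (simp add: scaleR_diff_left sum_subtractf scaleR_sum_right)
      then show ?thesis unfolding uexp by (simp add: scaleR_add_right algebra_simps)
    qed
    have z: "(\<Sum>i\<in>{j..<k}. (c' i - C * vec_index s (i - j)) *\<^sub>R (x i - x k)) + (- (C * sq)) *\<^sub>R d = 0"
      using h unfolding e3 e1[symmetric] e2[symmetric] .
    from indM[OF z] have z1: "\<forall>i\<in>{j..<k}. c' i = C * vec_index s (i - j)" and z2: "C * sq = 0" by auto
    have C0: "C = 0" using z2 sq_nz by simp
    have ci: "c i = 0" if "i \<in> {j'..<k}" for i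
    proof -
      have "i \<in> {j..<k}" using that jj' by auto
      then have "c' i = 0" using z1 C0 by simp
      then show ?thesis using that by (simp add: c'_def)
    qed
    show "\<forall>i\<in>{j'..<Suc k}. c i = 0"
    proof
      fix i assume i: "i \<in> {j'..<Suc k}"
      show "c i = 0"
      proof (cases "i < k")
        case True then show ?thesis using ci i by auto
      next
        case False
        then have ik: "i = k" "j' \<le> k" using i by auto
        have "C = (\<Sum>i\<in>{j'..<k}. c i) + c k" unfolding C_def using ik(2) by (rule sum.atLeastLessThan_Suc)
        also have "(\<Sum>i\<in>{j'..<k}. c i) = 0" using ci by simp
        finally show ?thesis using C0 ik by simp
      qed
    qed
  qed
  show ?thesis
    using inv argmin formula ineq orth1 indep1 unfolding M_def S_def j'_def by blast
qed

theorem theorem10: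
  fixes a :: "nat \<Rightarrow> real^'n" and b :: "nat \<Rightarrow> real" and m l :: nat
    and x0 xs :: "real^'n"
  assumes rows: "\<forall>j<m. a j \<noteq> 0"
    and range: "\<exists>z. \<forall>j<m. a j \<bullet> z = b j"
    and l: "l \<ge> 1"
    and sol: "\<forall>j<m. a j \<bullet> xs = b j"
  defines "x \<equiv> kx a b m l x0"
    and "H \<equiv> khist a b m l x0"
  shows
   "(\<exists>k. kd a b m (x k) = 0
        \<and> (\<forall>i<k. kd a b m (x i) \<noteq> 0 \<and> invertible_mat (gram (kM a b m l (H i))))
        \<and> (\<forall>j<m. a j \<bullet> x k = b j))
    \<or>
    (\<forall>k. kd a b m (x k) \<noteq> 0
        \<and> invertible_mat (gram (kM a b m l (H k)))
        \<and> is_arg_min (\<lambda>\<xi>. (norm (\<xi> - xs))^2)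
             (\<lambda>\<xi>. \<xi> \<in> affine hull ({x i | i. kj l k \<le> i \<and> i \<le> k} \<union> {kP a b m (x k)}))
             (x (Suc k))
        \<and> (norm (x k - xs))^2 - (norm (x (Suc k) - xs))^2
            = (kgamma a b m (x k))^2 * det (gram (kV l (H k))) / det (gram (kM a b m l (H k)))
        \<and> (norm (x (Suc k) - xs))^2 \<le> (norm (kP a b m (x k) - xs))^2)"
proof -
  define Inv where "Inv k \<longleftrightarrow> (\<forall>i\<in>{kj l k..<k}. (x i - x k) \<bullet> (xs - x k) = 0)
      \<and> (\<forall>c. (\<Sum>i\<in>{kj l k..<k}. c i *\<^sub>R (x i - x k)) = 0 \<longrightarrow> (\<forall>i\<in>{kj l k..<k}. c i = 0))" for k
  have st: "invertible_mat (gram (kM a b m l (H k)))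
        \<and> is_arg_min (\<lambda>\<xi>. (norm (\<xi> - xs))^2)
             (\<lambda>\<xi>. \<xi> \<in> affine hull ({x i | i. kj l k \<le> i \<and> i \<le> k} \<union> {kP a b m (x k)}))
             (x (Suc k))
        \<and> (norm (x k - xs))^2 - (norm (x (Suc k) - xs))^2
            = (kgamma a b m (x k))^2 * det (gram (kV l (H k))) / det (gram (kM a b m l (H k)))
        \<and> (norm (x (Suc k) - xs))^2 \<le> (norm (kP a b m (x k) - xs))^2
        \<and> Inv (Suc k)"
    if "Inv k" "kd a b m (x k) \<noteq> 0" for k
    using step[OF rows l sol, where k=k and ?x0.0=x0] that unfolding Inv_def x_def H_def by blast
  have Inv0: "Inv 0" unfolding Inv_def using l by (simp add: kj_def)
  have InvI: "Inv k" if "\<forall>i<k. kd a b m (x i) \<noteq> 0" for k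
    using that
  proof (induction k)
    case 0 show ?case by (rule Inv0)
  next
    case (Suc k)
    then have "Inv k" "kd a b m (x k) \<noteq> 0" by auto
    then show ?case using st by blast
  qed
  show ?thesis
  proof (cases "\<exists>k. kd a b m (x k) = 0")
    case True
    define k where "k = (LEAST k. kd a b m (x k) = 0)"
    have dk: "kd a b m (x k) = 0" unfolding k_def using True by (rule LeastI_ex)
    have lt: "kd a b m (x i) \<noteq> 0" if "i < k" for i
      using not_less_Least[of i "\<lambda>k. kd a b m (x k) = 0"] that unfolding k_def by blast
    have "\<forall>i<k. kd a b m (x i) \<noteq> 0 \<and> invertible_mat (gram (kM a b m l (H i)))"
    proof (intro allI impI conjI)
      fix i assume i: "i < k"
      show "kd a b m (x i) \<noteq> 0" using lt i .
      have "Inv i" using InvI lt i by auto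
      then show "invertible_mat (gram (kM a b m l (H i)))" using st lt i by blast
    qed
    moreover have "\<forall>j<m. a j \<bullet> x k = b j" using kd_zero_sol[OF rows sol dk] .
    ultimately show ?thesis using dk by blast
  next
    case False
    then have nz: "kd a b m (x k) \<noteq> 0" for k by blast
    have "Inv k" for k using InvI nz by blast
    then show ?thesis using st nz by blast
  qed
qed

end
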